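(* Let $h:\Delta^n\to\mathbb{R}$ be strictly convex and consider the FTRL learning dynamic with regularizer $h$. Let $h^*(\mathbf{q}):=\max_{\mathbf{x}\in\Delta^n}\{\langle\mathbf{q},\mathbf{x}\rangle-h(\mathbf{x})\}$. Then for any $\mathbf{x}^*\in\Delta^n$, the learning operator with shift $\mathbf{x}^*$ is finitely lossless via the storage function $L(\mathbf{q})=h^*(\mathbf{q})-\langle\mathbf{q},\mathbf{x}^*\rangle+h(\mathbf{x}^* )$. In particular, for every action $j$ the learning operator with shift $\mathbf{e}_j$ is finitely lossless, so every FTRL dynamic is a finitely lossless learning dynamic.
   Context: $\Delta^n=\{\mathbf{x}\in\mathbb{R}^n: x_j\ge 0,\ \sum_j x_j=1\}$; $\mathbf{e}_j$ is the $j$-th standard basis vector. A learning dynamic over $n$ actions is specified by a conversion function $f:\mathbb{R}^n\to\Delta^n$: given an initial state $\mathbf{q}^0\in\mathbb{R}^n$ and an input function $\mathbf{p}:[0,\infty)\to\mathbb{R}^n$ square integrable on bounded intervals, the state is $\mathbf{q}(t)=\mathbf{q}^0+\int_0^t\mathbf{p}(\tau)\,d\tau$ and the strategy is $\mathbf{x}(t)=f(\mathbf{q}(t))$. The FTRL dynamic with strictly convex regularizer $h:\Delta^n\to\mathbb{R}$ has conversion function $f(\mathbf{q})=\arg\max_{\mathbf{x}\in\Delta^n}\{\langle\mathbf{q},\mathbf{x}\rangle-h(\mathbf{x})\}$. The learning operator with shift $\mathbf{x}^*\in\mathbb{R}^n$ has state $\mathbf{q}$, input $\mathbf{p}$, output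 $\mathbf{x}-\mathbf{x}^*$; it is lossless via a storage function $L:\mathbb{R}^n\to\mathbb{R}$ if for every $\mathbf{q}^0$, every $\mathbf{p}$ and every $t\ge0$, $L(\mathbf{q}(t))= L(\mathbf{q}^0)+\int_0^t\langle\mathbf{p}(\tau),\mathbf{x}(\tau)-\mathbf{x}^*\rangle\,d\tau$, and finitely lossless if it is lossless via a storage function bounded from below. A learning dynamic is finitely lossless if for every action $j$ its learning operator with shift $\mathbf{e}_j$ is finitely lossless. *)

theory Defs
  imports "HOL-Analysis.Analysis"
begin

definition prob_simplex :: "(real ^ 'n::finite) set" where
  "prob_simplex = {x. (\<forall>j. 0 \<le> x $ j) \<and> (\<Sum>j\<in>UNIV. x $ j) = 1}"

definition strictly_convex_on :: "'a::real_vector set \<Rightarrow> ('a \<Rightarrow> real) \<Rightarrow> bool" where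
  "strictly_convex_on S h \<longleftrightarrow> convex S \<and>
     (\<forall>x\<in>S. \<forall>y\<in>S. \<forall>u::real. x \<noteq> y \<and> 0 < u \<and> u < 1 \<longrightarrow>
        h ((1 - u) *\<^sub>R x + u *\<^sub>R y) < (1 - u) * h x + u * h y)"

definition ftrl :: "(real ^ 'n::finite \<Rightarrow> real) \<Rightarrow> real ^ 'n \<Rightarrow> real ^ 'n" where
  "ftrl h q = (THE x. x \<in> prob_simplex \<and> (\<forall>y\<in>prob_simplex. q \<bullet> y - h y \<le> q \<bullet> x - h x))"

definition conj_simplex :: "(real ^ 'n::finite \<Rightarrow> real) \<Rightarrow> real ^ 'n \<Rightarrow> real" where
  "conj_simplex h q = (SUP x\<in>prob_simplex. q \<bullet> x - h x)"

definition admissible_input :: "(real \<Rightarrow> real ^ 'n::finite) \<Rightarrow> bool" where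
  "admissible_input p \<longleftrightarrow> (\<forall>T\<ge>0. p \<in> borel_measurable (lebesgue_on {0..T}) \<and>
      integrable (lebesgue_on {0..T}) (\<lambda>t. (norm (p t))\<^sup>2))"

definition state :: "real ^ 'n::finite \<Rightarrow> (real \<Rightarrow> real ^ 'n) \<Rightarrow> real \<Rightarrow> real ^ 'n" where
  "state q0 p t = q0 + integral {0..t} p"

definition lossless_via ::
  "(real ^ 'n::finite \<Rightarrow> real ^ 'n) \<Rightarrow> real ^ 'n \<Rightarrow> (real ^ 'n \<Rightarrow> real) \<Rightarrow> bool" where
  "lossless_via f xs L \<longleftrightarrow>
     (\<forall>q0 p t. admissible_input p \<longrightarrow> 0 \<le> t \<longrightarrow>
        L (state q0 p t) = L q0 + integral {0..t} (\<lambda>\<tau>. p \<tau> \<bullet> (f (state q0 p \<tau>) - xs)))"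

definition finitely_lossless :: "(real ^ 'n::finite \<Rightarrow> real ^ 'n) \<Rightarrow> real ^ 'n \<Rightarrow> bool" where
  "finitely_lossless f xs \<longleftrightarrow> (\<exists>L. bdd_below (range L) \<and> lossless_via f xs L)"

definition finitely_lossless_dynamic :: "(real ^ 'n::finite \<Rightarrow> real ^ 'n) \<Rightarrow> bool" where
  "finitely_lossless_dynamic f \<longleftrightarrow> (\<forall>j. finitely_lossless f (axis j 1))"

end

theory Submission
  imports Defs
begin


lemma adm_absint:
  fixes p :: "real \<Rightarrow> real ^ 'n::finite"
  assumes "admissible_input p" "0 \<le> T"
  shows "p absolutely_integrable_on {0..T}"
proof (rule measurable_bounded_by_integrable_imp_absolutely_integrable)
  show "p \<in> borel_measurable (lebesgue_on {0..T})" using assms unfolding admissible_input_def by blast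
  show "{0..T} \<in> sets lebesgue" by simp
  have "(\<lambda>t. (norm (p t))\<^sup>2) integrable_on {0..T}"
    using assms unfolding admissible_input_def by (intro integrable_on_lebesgue_on) auto
  moreover have "(\<lambda>t. 1::real) integrable_on {0..T}" by (simp add: integrable_on_const)
  ultimately show "(\<lambda>t. 1 + (norm (p t))\<^sup>2) integrable_on {0..T}" by (intro integrable_add)
  show "norm (p x) \<le> 1 + (norm (p x))\<^sup>2" for x
  proof (cases "norm (p x) \<le> 1")
    case True then show ?thesis using zero_le_power2[of "norm (p x)"] by linarith
  next
    case False
    then have "norm (p x) * 1 \<le> norm (p x) * norm (p x)" by (intro mult_left_mono) auto
    then show ?thesis by (simp add: power2_eq_square)
  qed
qed

lemma bilinear_inner': "bilinear (\<lambda>(x::'a::real_inner) y. x \<bullet> y)"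
  unfolding bilinear_def
  by (auto intro!: bounded_linear.linear bounded_linear_inner_left bounded_linear_inner_right)

lemma prod_absint:
  fixes p w :: "real \<Rightarrow> real ^ 'n::finite"
  assumes "p absolutely_integrable_on {a..b}" "continuous_on {a..b} w"
  shows "(\<lambda>t. p t \<bullet> w t) absolutely_integrable_on {a..b}"
proof -
  have "(\<lambda>t. w t \<bullet> p t) absolutely_integrable_on {a..b}"
  proof (rule absolutely_integrable_bounded_measurable_product[where h="\<lambda>x y. x \<bullet> y"])
    show "bilinear (\<lambda>(x::real^'n) y. x \<bullet> y)" by (rule bilinear_inner')
    show "w \<in> borel_measurable (lebesgue_on {a..b})"
      using assms(2) by (intro continuous_imp_measurable_on_sets_lebesgue) auto
    show "bounded (w ` {a..b})"
      using assms(2) by (intro compact_imp_bounded compact_continuous_image) auto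
  qed (use assms in auto)
  then show ?thesis by (simp add: inner_commute)
qed



lemma const_from_local:
  fixes G F :: "real \<Rightarrow> real"
  assumes T: "0 \<le> T"
    and loc: "\<And>e. e > 0 \<Longrightarrow> \<exists>d>0. \<forall>s u. 0 \<le> s \<longrightarrow> s \<le> u \<longrightarrow> u \<le> T \<longrightarrow> u - s < d
               \<longrightarrow> \<bar>G u - G s\<bar> \<le> e * (F u - F s)"
  shows "G T = G 0"
proof -
  have bound: "\<bar>G T - G 0\<bar> \<le> e * (F T - F 0)" if e: "e > 0" for e
  proof -
    obtain d where d: "d > 0" and dd: "\<And>s u. 0 \<le> s \<Longrightarrow> s \<le> u \<Longrightarrow> u \<le> T \<Longrightarrow> u - s < d
               \<Longrightarrow> \<bar>G u - G s\<bar> \<le> e * (F u - F s)"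
      using loc[OF e] by blast
    define a where "a k = min (real k * d / 2) T" for k :: nat
    have ind: "\<bar>G (a k) - G 0\<bar> \<le> e * (F (a k) - F 0)" for k
    proof (induction k)
      case 0
      then show ?case using T by (simp add: a_def)
    next
      case (Suc k)
      have 1: "0 \<le> a k" "a k \<le> a (Suc k)" "a (Suc k) \<le> T" "a (Suc k) - a k < d"
        using T d by (auto simp: a_def min_def field_simps)
      have "\<bar>G (a (Suc k)) - G (a k)\<bar> \<le> e * (F (a (Suc k)) - F (a k))"
        using dd[OF 1] .
      with Suc show ?case by (simp add: algebra_simps)
    qed
    obtain k where k: "2 * T / d \<le> real k" using real_arch_simple by blast
    have "a k = T" using k d T by (simp add: a_def min_def field_simps)
    with ind[of k] show ?thesis by simp
  qed
  show ?thesis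
  proof (rule ccontr)
    assume ne: "G T \<noteq> G 0"
    define D where "D = \<bar>G T - G 0\<bar>"
    have D: "D > 0" using ne by (simp add: D_def)
    have c: "F T - F 0 > 0" using bound[of 1] D by (simp add: D_def)
    have "D \<le> (D / (2 * (F T - F 0))) * (F T - F 0)"
      using bound[of "D / (2 * (F T - F 0))"] D c by (simp add: D_def)
    also have "\<dots> = D / 2" using c by (simp add: field_simps)
    finally show False using D by simp
  qed
qed



lemma integral_inner_const:
  fixes p :: "real \<Rightarrow> real ^ 'n::finite"
  assumes "p integrable_on S"
  shows "integral S (\<lambda>t. p t \<bullet> c) = integral S p \<bullet> c"
  using integral_linear[OF assms bounded_linear_inner_left[of c]] by (simp add: o_def)

lemma lossless_abstract:
  fixes L :: "real^'n::finite \<Rightarrow> real" and y :: "real^'n \<Rightarrow> real^'n" and p :: "real \<Rightarrow> real^'n"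
  assumes lo: "\<And>q q'. (q' - q) \<bullet> y q \<le> L q' - L q"
    and up: "\<And>q q'. L q' - L q \<le> (q' - q) \<bullet> y q'"
    and ycont: "continuous_on UNIV y"
    and pint: "p absolutely_integrable_on {0..T}" and T: "0 \<le> T"
  shows "L (q0 + integral {0..T} p) = L q0 + integral {0..T} (\<lambda>\<tau>. p \<tau> \<bullet> y (q0 + integral {0..\<tau>} p))"
proof -
  define Q where "Q \<tau> = q0 + integral {0..\<tau>} p" for \<tau>
  define Y where "Y \<tau> = y (Q \<tau>)" for \<tau>
  define G where "G \<tau> = L (Q \<tau>) - integral {0..\<tau>} (\<lambda>t. p t \<bullet> Y t)" for \<tau>
  define F where "F \<tau> = integral {0..\<tau>} (\<lambda>t. norm (p t))" for \<tau>
  have pi: "p integrable_on {0..T}" and npi: "(\<lambda>t. norm (p t)) integrable_on {0..T}"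
    using absolutely_integrable_on_def[THEN iffD1, OF pint] by auto
  have Qc: "continuous_on {0..T} Q"
    unfolding Q_def by (intro continuous_on_add continuous_on_const indefinite_integral_continuous_1 pi)
  have Yc: "continuous_on {0..T} Y"
    unfolding Y_def by (rule continuous_on_compose2[OF ycont Qc]) auto
  have pY: "(\<lambda>t. p t \<bullet> Y t) integrable_on {0..T}"
    using absolutely_integrable_on_def[THEN iffD1, OF prod_absint[OF pint Yc]] by auto
  have pc: "(\<lambda>t. p t \<bullet> c) integrable_on {0..T}" for c
    using absolutely_integrable_on_def[THEN iffD1, OF prod_absint[OF pint continuous_on_const]] by auto
  have uc: "uniformly_continuous_on {0..T} Y"
    by (rule compact_uniformly_continuous[OF Yc]) auto
  have "G T = G 0"
  proof (rule const_from_local[OF T])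
    fix e :: real assume e: "e > 0"
    have "\<exists>d>0. \<forall>x\<in>{0..T}. \<forall>x'\<in>{0..T}. dist x' x < d \<longrightarrow> dist (Y x') (Y x) < e"
      using uc[unfolded uniformly_continuous_on_def, rule_format, OF e] .
    then obtain d where d: "d > 0" and dd0: "\<forall>x\<in>{0..T}. \<forall>x'\<in>{0..T}. dist x' x < d \<longrightarrow> dist (Y x') (Y x) < e"
      by blast
    have dd: "\<And>x x'. x \<in> {0..T} \<Longrightarrow> x' \<in> {0..T} \<Longrightarrow> dist x' x < d \<Longrightarrow> dist (Y x') (Y x) < e"
      using dd0 by blast
    show "\<exists>d>0. \<forall>s u. 0 \<le> s \<longrightarrow> s \<le> u \<longrightarrow> u \<le> T \<longrightarrow> u - s < d
               \<longrightarrow> \<bar>G u - G s\<bar> \<le> e * (F u - F s)"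
    proof (intro exI[of _ d] conjI allI impI d)
      fix s u :: real
      assume su: "0 \<le> s" "s \<le> u" "u \<le> T" "u - s < d"
      have sub: "{s..u} \<subseteq> {0..T}" "{0..u} \<subseteq> {0..T}" using su by auto
      have piu: "p integrable_on {0..u}" using integrable_on_subinterval[OF pi sub(2)] .
      have pis: "p integrable_on {s..u}" using integrable_on_subinterval[OF pi sub(1)] .
      have npis: "(\<lambda>t. norm (p t)) integrable_on {s..u}" using integrable_on_subinterval[OF npi sub(1)] .
      have pYs: "(\<lambda>t. p t \<bullet> Y t) integrable_on {s..u}" using integrable_on_subinterval[OF pY sub(1)] .
      have pcs: "(\<lambda>t. p t \<bullet> c) integrable_on {s..u}" for c using integrable_on_subinterval[OF pc sub(1)] .
      have Qd: "Q u - Q s = integral {s..u} p"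
        using Henstock_Kurzweil_Integration.integral_combine[OF su(1) su(2) piu] by (simp add: Q_def algebra_simps)
      have Gd: "G u - G s = L (Q u) - L (Q s) - integral {s..u} (\<lambda>t. p t \<bullet> Y t)"
        using Henstock_Kurzweil_Integration.integral_combine[OF su(1) su(2) integrable_on_subinterval[OF pY sub(2)]]
        by (simp add: G_def algebra_simps)
      have Fd: "F u - F s = integral {s..u} (\<lambda>t. norm (p t))"
        using Henstock_Kurzweil_Integration.integral_combine[OF su(1) su(2) integrable_on_subinterval[OF npi sub(2)]]
        by (simp add: F_def algebra_simps)
      have key: "\<bar>integral {s..u} (\<lambda>t. p t \<bullet> c) - integral {s..u} (\<lambda>t. p t \<bullet> Y t)\<bar> \<le> e * (F u - F s)"
        if c: "c = Y s \<or> c = Y u" for c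
      proof -
        have "integral {s..u} (\<lambda>t. p t \<bullet> c) - integral {s..u} (\<lambda>t. p t \<bullet> Y t)
              = integral {s..u} (\<lambda>t. p t \<bullet> c - p t \<bullet> Y t)"
          using integral_diff[OF pcs pYs] by simp
        also have "norm \<dots> \<le> integral {s..u} (\<lambda>t. e * norm (p t))"
        proof (rule integral_norm_bound_integral)
          show "(\<lambda>t. p t \<bullet> c - p t \<bullet> Y t) integrable_on {s..u}" using pcs pYs by (rule integrable_diff)
          show "(\<lambda>t. e * norm (p t)) integrable_on {s..u}" using integrable_on_cmult_left[OF npis, of e] by simp
          fix t assume t: "t \<in> {s..u}"
          have "norm (c - Y t) \<le> e"
          proof -
            have "t \<in> {0..T}" "s \<in> {0..T}" "u \<in> {0..T}" using t su by auto
            moreover have "dist t s < d" "dist u t < d" using t su by (auto simp: dist_real_def)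
            ultimately have "dist (Y t) (Y s) < e" "dist (Y u) (Y t) < e" using dd by blast+
            then show ?thesis using c by (auto simp: dist_norm norm_minus_commute)
          qed
          have "norm (p t \<bullet> c - p t \<bullet> Y t) = \<bar>p t \<bullet> (c - Y t)\<bar>" by (simp add: inner_diff_right)
          also have "\<dots> \<le> norm (p t) * norm (c - Y t)" by (rule Cauchy_Schwarz_ineq2)
          also have "\<dots> \<le> norm (p t) * e" using \<open>norm (c - Y t) \<le> e\<close> by (simp add: mult_left_mono)
          finally show "norm (p t \<bullet> c - p t \<bullet> Y t) \<le> e * norm (p t)" by (simp add: mult.commute)
        qed
        also have "\<dots> = e * (F u - F s)" by (simp add: Fd)
        finally show ?thesis by simp
      qed
      have lo': "integral {s..u} (\<lambda>t. p t \<bullet> Y s) \<le> L (Q u) - L (Q s)"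
        using lo[where q="Q s" and q'="Q u"] by (simp add: Qd integral_inner_const[OF pis] Y_def)
      have up': "L (Q u) - L (Q s) \<le> integral {s..u} (\<lambda>t. p t \<bullet> Y u)"
        using up[where q="Q s" and q'="Q u"] by (simp add: Qd integral_inner_const[OF pis] Y_def)
      show "\<bar>G u - G s\<bar> \<le> e * (F u - F s)"
        using key[of "Y s", OF disjI1[OF refl]] key[of "Y u", OF disjI2[OF refl]] lo' up' unfolding Gd by linarith
    qed
  qed
  moreover have "G 0 = L q0"
  proof -
    have "Q 0 = q0" unfolding Q_def by simp
    moreover have "integral {0..0} (\<lambda>t. p t \<bullet> Y t) = 0" by simp
    ultimately show ?thesis unfolding G_def by simp
  qed
  ultimately have "L (Q T) = L q0 + integral {0..T} (\<lambda>t. p t \<bullet> Y t)"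
    unfolding G_def by linarith
  then show ?thesis unfolding Q_def Y_def .
qed

lemma simplex_axis: "axis j 1 \<in> (prob_simplex :: (real^'n::finite) set)"
  unfolding prob_simplex_def by (auto simp: axis_def)

lemma simplex_compact: "compact (prob_simplex :: (real^'n::finite) set)"
proof -
  have "prob_simplex \<subseteq> cbox (0::real^'n) 1"
  proof
    fix x :: "real^'n" assume x: "x \<in> prob_simplex"
    have "x $ i \<le> 1" for i
    proof -
      have "x $ i = (\<Sum>j\<in>{i}. x $ j)" by simp
      also have "\<dots> \<le> (\<Sum>j\<in>UNIV. x $ j)"
        using x by (intro sum_mono2) (auto simp: prob_simplex_def)
      finally show ?thesis using x by (simp add: prob_simplex_def)
    qed
    then show "x \<in> cbox 0 1" using x by (auto simp: mem_box_cart prob_simplex_def)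
  qed
  then have "bounded (prob_simplex :: (real^'n) set)" using bounded_cbox bounded_subset by blast
  have eq: "(prob_simplex :: (real^'n) set) = {x. \<forall>j. 0 \<le> x $ j} \<inter> {x. (\<Sum>j\<in>UNIV. x $ j) = 1}"
    by (auto simp: prob_simplex_def)
  have c1: "closed {x::real^'n. \<forall>j. 0 \<le> x $ j}"
    by (intro closed_Collect_all closed_Collect_le continuous_intros)
  have c2: "closed {x::real^'n. (\<Sum>j\<in>UNIV. x $ j) = 1}"
    by (intro closed_Collect_eq continuous_intros)
  have "closed (prob_simplex :: (real^'n) set)" unfolding eq using c1 c2 by blast
  with \<open>bounded (prob_simplex :: (real^'n) set)\<close> show ?thesis using compact_eq_bounded_closed by blast
qed

theorem theorem4p1:
  fixes h :: "real ^ 'n::finite \<Rightarrow> real"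
  assumes "strictly_convex_on prob_simplex h"
    and "continuous_on prob_simplex h"
  shows "(\<forall>xs\<in>prob_simplex.
            lossless_via (ftrl h) xs (\<lambda>q. conj_simplex h q - q \<bullet> xs + h xs) \<and>
            bdd_below (range (\<lambda>q. conj_simplex h q - q \<bullet> xs + h xs)))
         \<and> finitely_lossless_dynamic (ftrl h)"
proof -
  let ?S = "prob_simplex :: (real^'n) set"
  have cvx: "convex ?S" and sc: "\<And>x y u. x \<in> ?S \<Longrightarrow> y \<in> ?S \<Longrightarrow> x \<noteq> y \<Longrightarrow> 0 < u \<Longrightarrow> u < 1
      \<Longrightarrow> h ((1 - u) *\<^sub>R x + u *\<^sub>R y) < (1 - u) * h x + u * h y"
    using assms(1) unfolding strictly_convex_on_def by blast+
  obtain j0 :: 'n where True by blast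
  have ne: "?S \<noteq> {}" using simplex_axis[of j0] by blast
  have ex: "\<exists>x\<in>?S. \<forall>y\<in>?S. q \<bullet> y - h y \<le> q \<bullet> x - h x" for q
    by (rule continuous_attains_sup[OF simplex_compact ne]) (intro continuous_intros assms(2))
  have uniq: "x = z" if xz: "x \<in> ?S" "z \<in> ?S" "\<forall>y\<in>?S. q \<bullet> y - h y \<le> q \<bullet> x - h x"
      "\<forall>y\<in>?S. q \<bullet> y - h y \<le> q \<bullet> z - h z" for q x z
  proof (rule ccontr)
    assume "x \<noteq> z"
    define m where "m = (1 - 1/2) *\<^sub>R x + (1/2::real) *\<^sub>R z"
    have mS: "m \<in> ?S" unfolding m_def using cvx xz(1,2) by (intro convexD) auto
    have hm: "h m < h x / 2 + h z / 2"
      unfolding m_def using sc[OF xz(1,2) \<open>x \<noteq> z\<close>, of "1/2"] by simp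
    have qm: "q \<bullet> m = (q \<bullet> x) / 2 + (q \<bullet> z) / 2"
      unfolding m_def by (simp add: inner_add_right)
    have "q \<bullet> z - h z \<le> q \<bullet> x - h x" "q \<bullet> x - h x \<le> q \<bullet> z - h z" "q \<bullet> m - h m \<le> q \<bullet> x - h x"
      using xz mS by auto
    then show False using hm qm by linarith
  qed
  have ex1: "\<exists>!x. x \<in> ?S \<and> (\<forall>y\<in>?S. q \<bullet> y - h y \<le> q \<bullet> x - h x)" for q
    using ex[of q] uniq[of _ _ q] by blast
  define X where "X = ftrl h"
  have Xp: "X q \<in> ?S \<and> (\<forall>y\<in>?S. q \<bullet> y - h y \<le> q \<bullet> X q - h (X q))" for q
    unfolding X_def ftrl_def by (rule theI'[OF ex1])
  have XS: "X q \<in> ?S" and Xmax: "\<And>y. y \<in> ?S \<Longrightarrow> q \<bullet> y - h y \<le> q \<bullet> X q - h (X q)" for q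
    using Xp by auto
  have conj: "conj_simplex h q = q \<bullet> X q - h (X q)" for q
    unfolding conj_simplex_def by (rule cSup_eq_maximum) (use XS Xmax in auto)
  have Xc: "continuous_on UNIV X"
  proof -
    have fim: "X \<in> UNIV \<rightarrow> ?S" using XS by auto
    define A where "A y = (UNIV \<times> ?S) \<inter> (\<lambda>w. (fst w \<bullet> snd w - h (snd w)) - (fst w \<bullet> y - h y)) -` {0..}" for y
    have geq: "(\<lambda>x. (x, X x)) ` UNIV = (\<Inter>y\<in>?S. A y)"
    proof (rule set_eqI)
      fix w :: "(real^'n) \<times> (real^'n)"
      obtain q z where w: "w = (q, z)" by (cases w)
      have "w \<in> (\<lambda>x. (x, X x)) ` UNIV \<longleftrightarrow> z = X q" by (auto simp: w)
      also have "\<dots> \<longleftrightarrow> z \<in> ?S \<and> (\<forall>y\<in>?S. q \<bullet> y - h y \<le> q \<bullet> z - h z)"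
      proof
        assume "z = X q" then show "z \<in> ?S \<and> (\<forall>y\<in>?S. q \<bullet> y - h y \<le> q \<bullet> z - h z)" using Xp[of q] by simp
      next
        assume a: "z \<in> ?S \<and> (\<forall>y\<in>?S. q \<bullet> y - h y \<le> q \<bullet> z - h z)"
        show "z = X q" using uniq[of z "X q" q] a Xp[of q] by blast
      qed
      also have "\<dots> \<longleftrightarrow> w \<in> (\<Inter>y\<in>?S. A y)"
        using ne by (auto simp: A_def w)
      finally show "w \<in> (\<lambda>x. (x, X x)) ` UNIV \<longleftrightarrow> w \<in> (\<Inter>y\<in>?S. A y)" .
    qed
    have hc: "continuous_on (UNIV \<times> ?S) (\<lambda>w. h (snd w))"
      by (rule continuous_on_compose2[OF assms(2) continuous_on_snd]) auto
    have "closedin (top_of_set (UNIV \<times> ?S)) (A y)" for y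
      unfolding A_def
      by (intro continuous_closedin_preimage closed_atLeast continuous_intros hc)
    then have "closedin (top_of_set (UNIV \<times> ?S)) ((\<lambda>x. (x, X x)) ` UNIV)"
      unfolding geq by (intro closedin_INT ne)
    then show ?thesis using continuous_closed_graph_eq[OF simplex_compact fim] by blast
  qed
  have main: "lossless_via (ftrl h) xs (\<lambda>q. conj_simplex h q - q \<bullet> xs + h xs) \<and>
            bdd_below (range (\<lambda>q. conj_simplex h q - q \<bullet> xs + h xs))" if xs: "xs \<in> ?S" for xs
  proof
    define L where "L q = conj_simplex h q - q \<bullet> xs + h xs" for q
    have lo: "(q' - q) \<bullet> (X q - xs) \<le> L q' - L q" for q q'
      using Xmax[of "X q" q'] XS[of q] by (simp add: L_def conj inner_diff_left inner_diff_right)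
    have up: "L q' - L q \<le> (q' - q) \<bullet> (X q' - xs)" for q q'
      using Xmax[of "X q'" q] XS[of q'] by (simp add: L_def conj inner_diff_left inner_diff_right)
    have yc: "continuous_on UNIV (\<lambda>q. X q - xs)" by (intro continuous_intros Xc)
    show "lossless_via (ftrl h) xs (\<lambda>q. conj_simplex h q - q \<bullet> xs + h xs)"
      unfolding lossless_via_def state_def L_def[symmetric] X_def[symmetric]
    proof (intro allI impI)
      fix q0 :: "real^'n" and p :: "real \<Rightarrow> real^'n" and t :: real
      assume p: "admissible_input p" and t: "0 \<le> t"
      show "L (q0 + integral {0..t} p) = L q0 + integral {0..t} (\<lambda>\<tau>. p \<tau> \<bullet> (X (q0 + integral {0..\<tau>} p) - xs))"
        using lossless_abstract[where y="\<lambda>q. X q - xs", OF lo up yc adm_absint[OF p t] t] .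
    qed
    show "bdd_below (range (\<lambda>q. conj_simplex h q - q \<bullet> xs + h xs))"
    proof (rule bdd_belowI2[of _ 0])
      fix q
      show "0 \<le> conj_simplex h q - q \<bullet> xs + h xs"
        using Xmax[OF xs, of q] by (simp add: conj)
    qed
  qed
  have "finitely_lossless_dynamic (ftrl h)"
    unfolding finitely_lossless_dynamic_def finitely_lossless_def
  proof
    fix j :: 'n
    show "\<exists>L. bdd_below (range L) \<and> lossless_via (ftrl h) (axis j 1) L"
      using main[OF simplex_axis[of j]] by (intro exI[of _ "\<lambda>q. conj_simplex h q - q \<bullet> axis j 1 + h (axis j 1)"]) simp
  qed
  then show ?thesis using main by (intro conjI ballI) auto
qed

end
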